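(* Consider the multi-resource General Lotto game with the weighted-contribution winning rule $W_{\mathrm{WC}}$ with weights $\boldsymbol a,\boldsymbol b\in\mathbb R^T_{\ge0}$, budgets $\boldsymbol X,\boldsymbol Y\in\mathbb R^T_{\ge0}$ with $\sum_t a_tX_t>0$, and contest values $\boldsymbol v$. Let $\beta=\frac{\sum_{t}b_tY_t}{\sum_t a_tX_t}$. Then the game has an equilibrium, and in every equilibrium the payoff to player $\mathcal X$ is $L(\beta)$ and the payoff to player $\mathcal Y$ is $1-L(\beta)$.
   Context: Contests $\mathcal C=\{1,\dots,C\}$ with values $v_c>0$, $\sum_cv_c=1$; resource types $\mathcal T=\{1,\dots,T\}$. Pure allocations $\mathbf x=(\boldsymbol x_1,\dots,\boldsymbol x_C)\in\mathbb R_{\ge0}^{CT}$, $\boldsymbol x_c=(x_{c,1},\dots,x_{c,T})$, and similarly $\mathbf y$. Strategy set $\mathbb F(\boldsymbol X)$: probability distributions $F$ on $\mathbb R^{CT}_{\ge0}$ with $\mathbb E_{\mathbf x\sim F}[\sum_cx_{c,t}]\le X_t$ for each $t$; similarly $\mathbb F(\boldsymbol Y)$. Winning rule $W_{\mathrm{WC}}(\boldsymbol x,\boldsymbol y)=1$ if $\sum_ta_tx_t\ge\sum_tb_ty_t$, else $0$. Payoffs $\pi_{\mathcal X}(F_{\mathcal X},F_{\mathcal Y})=\mathbb E[\sum_cv_cW_{\mathrm{WC}}(\boldsymbol x_c,\boldsymbol y_c)]$ with $\mathbf x\sim F_{\mathcal X}$, $\mathbf y\sim F_{\mathcal Y}$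 independent, and $\pi_{\mathcal Y}=1-\pi_{\mathcal X}$. Equilibrium: $(F^*_{\mathcal X},F^*_{\mathcal Y})$ with $\pi_{\mathcal X}(F_{\mathcal X},F^*_{\mathcal Y})\le\pi_{\mathcal X}(F^*_{\mathcal X},F^*_{\mathcal Y})\le\pi_{\mathcal X}(F^*_{\mathcal X},F_{\mathcal Y})$ for all admissible $F_{\mathcal X},F_{\mathcal Y}$. $L(\alpha)=1-\alpha/2$ for $\alpha\le1$ and $L(\alpha)=1/(2\alpha)$ for $\alpha>1$. *)

theory Defs
  imports "HOL-Probability.Probability"
begin

text \<open>Pure allocations of player X (or Y): elements of real^'t^'c, where
  x $ c $ t is the amount of resource type t put on contest c.\<close>

definition W_WC :: "real^'t::finite \<Rightarrow> real^'t \<Rightarrow> real^'t \<Rightarrow> real^'t \<Rightarrow> real" where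
  "W_WC a b x y = (if (\<Sum>t\<in>UNIV. a$t * x$t) \<ge> (\<Sum>t\<in>UNIV. b$t * y$t) then 1 else 0)"

definition strategies :: "real^'t::finite \<Rightarrow> (real^'t^'c::finite) measure set" where
  "strategies X = {F. prob_space F \<and> sets F = sets borel \<and>
      (AE x in F. \<forall>c t. 0 \<le> x$c$t) \<and>
      (\<forall>t. (\<integral>\<^sup>+x. ennreal (\<Sum>c\<in>UNIV. x$c$t) \<partial>F) \<le> ennreal (X$t))}"

definition payoffX :: "('c::finite \<Rightarrow> real) \<Rightarrow> real^'t::finite \<Rightarrow> real^'t \<Rightarrow>
    (real^'t^'c) measure \<Rightarrow> (real^'t^'c) measure \<Rightarrow> real" where
  "payoffX v a b F G =
     (\<integral>z. (\<Sum>c\<in>UNIV. v c * W_WC a b (fst z $ c) (snd z $ c)) \<partial>(F \<Otimes>\<^sub>M G))"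

definition payoffY :: "('c::finite \<Rightarrow> real) \<Rightarrow> real^'t::finite \<Rightarrow> real^'t \<Rightarrow>
    (real^'t^'c) measure \<Rightarrow> (real^'t^'c) measure \<Rightarrow> real" where
  "payoffY v a b F G = 1 - payoffX v a b F G"

definition is_equilibrium :: "('c::finite \<Rightarrow> real) \<Rightarrow> real^'t::finite \<Rightarrow> real^'t \<Rightarrow>
    real^'t \<Rightarrow> real^'t \<Rightarrow> (real^'t^'c) measure \<Rightarrow> (real^'t^'c) measure \<Rightarrow> bool" where
  "is_equilibrium v a b X Y F G \<longleftrightarrow>
     F \<in> strategies X \<and> G \<in> strategies Y \<and>
     (\<forall>F' \<in> strategies X. payoffX v a b F' G \<le> payoffX v a b F G) \<and>
     (\<forall>G' \<in> strategies Y. payoffX v a b F G \<le> payoffX v a b F G')"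

definition L :: "real \<Rightarrow> real" where
  "L \<alpha> = (if \<alpha> \<le> 1 then 1 - \<alpha> / 2 else 1 / (2 * \<alpha>))"

end

theory Submission imports Defs begin

lemma vec_nth_meas[measurable (raw)]:
  "f \<in> borel_measurable M \<Longrightarrow> (\<lambda>x. (f x :: 'a::{euclidean_space}^'n::finite) $ i) \<in> borel_measurable M"
  by (rule borel_measurable_continuous_on[where f="\<lambda>x. x $ i"]) (auto intro!: continuous_intros)

definition U :: "real measure" where "U = uniform_measure lborel {0..1}"

definition mprof :: "real \<Rightarrow> real \<Rightarrow> real" where
  "mprof g r = (2 / g^2) * max 0 (r - (1 - g))"

lemma mprof_cont: "continuous_on UNIV (mprof g)"
  unfolding mprof_def by (intro continuous_intros)

lemma mprof_meas[measurable (raw)]: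
  assumes "f \<in> borel_measurable M" shows "(\<lambda>x. mprof g (f x)) \<in> borel_measurable M"
  by (rule measurable_compose[OF assms borel_measurable_continuous_onI[OF mprof_cont]])

lemma mprof_nonneg: "0 \<le> mprof g r"
  unfolding mprof_def by simp

lemma U_prob: "prob_space U"
  unfolding U_def by (rule prob_space_uniform_measure) auto

lemma sets_U[measurable_cong]: "sets U = sets borel"
  unfolding U_def by simp

lemma space_U[simp]: "space U = UNIV"
  unfolding U_def by simp

lemma measure_U: "A \<in> sets borel \<Longrightarrow> measure U A = measure lborel ({0..1} \<inter> A)"
  unfolding U_def by (subst measure_uniform_measure) auto

lemma U_Icc: assumes "0 \<le> lo" "lo \<le> 1" shows "measure U {lo..1} = 1 - lo"
proof -
  have "{0..1} \<inter> {lo..1} = {lo..(1::real)}" using assms by auto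
  then show ?thesis using assms by (simp add: measure_U)
qed

lemma U_Iic: assumes "0 \<le> hi" shows "measure U {..hi} \<le> hi"
proof -
  have "{0..1} \<inter> {..hi} = {0..min 1 hi}" using assms by auto
  then show ?thesis using assms by (simp add: measure_U)
qed

lemma U_integrable:
  fixes f :: "real \<Rightarrow> real" and B :: real
  assumes "f \<in> borel_measurable borel" "\<And>r. \<bar>f r\<bar> \<le> B" shows "integrable U f"
proof -
  interpret prob_space U by (rule U_prob)
  show ?thesis
    by (rule integrable_const_bound[where B=B]) (use assms in \<open>auto simp: measurable_cong_sets[OF sets_U refl]\<close>)
qed

lemma ind_lower:
  assumes "0 < g" "g \<le> 1" "0 < K" "0 < w" "0 \<le> s"
  shows "g - g^2 * s / (2*w*K) \<le> (\<integral>r. (if s \<le> K * (w * mprof g r) then 1 else 0) \<partial>U)"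
proof -
  interpret prob_space U by (rule U_prob)
  define lo where "lo = 1 - g + g^2 * s / (2*w*K)"
  have lo0: "0 \<le> lo" unfolding lo_def using assms by (auto intro!: add_nonneg_nonneg divide_nonneg_pos)
  have int1: "integrable U (\<lambda>r. (if s \<le> K * (w * mprof g r) then 1 else 0::real))"
    by (rule U_integrable[where B=1]) auto
  show ?thesis
  proof (cases "lo \<le> 1")
    case True
    have pw: "indicator {lo..1} r \<le> (if s \<le> K * (w * mprof g r) then 1 else 0::real)" for r
    proof (cases "r \<in> {lo..1}")
      case True
      then have "g^2 * s / (2*w*K) \<le> r - (1 - g)" unfolding lo_def by auto
      then have "g^2 * s / (2*w*K) \<le> max 0 (r - (1 - g))" by linarith
      then have "(2 / g^2) * (g^2 * s / (2*w*K)) \<le> mprof g r"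
        unfolding mprof_def using assms by (intro mult_left_mono) auto
      moreover have "(2 / g^2) * (g^2 * s / (2*w*K)) = s / (w * K)" using assms by (simp add: field_simps)
      ultimately have "s / (w*K) \<le> mprof g r" by simp
      then have "K * (w * (s / (w*K))) \<le> K * (w * mprof g r)"
        using assms by (intro mult_left_mono) auto
      moreover have "K * (w * (s / (w*K))) = s" using assms by simp
      ultimately show ?thesis using True by simp
    qed (simp)
    have int2: "integrable U (indicator {lo..1} :: real \<Rightarrow> real)"
      by (rule U_integrable[where B=1]) (auto split: split_indicator)
    have "(\<integral>r. indicator {lo..1} r \<partial>U) \<le> (\<integral>r. (if s \<le> K * (w * mprof g r) then 1 else 0::real) \<partial>U)"
      by (rule integral_mono[OF int2 int1]) (rule pw)
    moreover have "(\<integral>r. indicator {lo..1} r \<partial>U) = 1 - lo"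
      using U_Icc[OF lo0 True] by simp
    moreover have "1 - lo = g - g^2 * s / (2*w*K)" unfolding lo_def by simp
    ultimately show ?thesis by simp
  next
    case False
    have "0 \<le> (\<integral>r. (if s \<le> K * (w * mprof g r) then 1 else 0::real) \<partial>U)"
      by (intro integral_nonneg_AE) auto
    then show ?thesis using False unfolding lo_def by linarith
  qed
qed

lemma ind_upper:
  assumes "0 < g" "g \<le> 1" "0 < K" "0 < w" "0 \<le> x"
  shows "(\<integral>r. (if K * (w * mprof g r) \<le> x then 1 else 0) \<partial>U) \<le> 1 - g + g^2 * x / (2*w*K)"
proof -
  interpret prob_space U by (rule U_prob)
  define hi where "hi = 1 - g + g^2 * x / (2*w*K)"
  have hi0: "0 \<le> hi" unfolding hi_def using assms by (auto intro!: add_nonneg_nonneg divide_nonneg_pos)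
  have int1: "integrable U (\<lambda>r. (if K * (w * mprof g r) \<le> x then 1 else 0::real))"
    by (rule U_integrable[where B=1]) auto
  have pw: "(if K * (w * mprof g r) \<le> x then 1 else 0::real) \<le> indicator {..hi} r" for r
  proof (cases "K * (w * mprof g r) \<le> x")
    case True
    have "(K * w * (2 / g^2)) * max 0 (r - (1 - g)) \<le> x" using True unfolding mprof_def by (simp add: mult.assoc)
    then have "max 0 (r - (1 - g)) \<le> x / (K * w * (2 / g^2))"
      using assms by (subst le_divide_eq) (auto simp: mult.commute)
    moreover have "x / (K * w * (2 / g^2)) = g^2 * x / (2*w*K)" using assms by (simp add: field_simps)
    ultimately have "r \<le> hi" unfolding hi_def by linarith
    then show ?thesis using True by simp
  qed (simp)
  have int2: "integrable U (indicator {..hi} :: real \<Rightarrow> real)"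
    by (rule U_integrable[where B=1]) (auto split: split_indicator)
  have "(\<integral>r. (if K * (w * mprof g r) \<le> x then 1 else 0::real) \<partial>U) \<le> (\<integral>r. indicator {..hi} r \<partial>U)"
    by (rule integral_mono[OF int1 int2]) (rule pw)
  also have "\<dots> \<le> hi" using U_Iic[OF hi0] by simp
  finally show ?thesis unfolding hi_def .
qed

lemma mprof_budget: assumes "0 \<le> g" "g \<le> 1" shows "(\<integral>\<^sup>+r. ennreal (mprof g r) \<partial>U) \<le> 1"
proof (cases "g = 0")
  case True then show ?thesis by (simp add: mprof_def)
next
  case False
  with assms have g: "0 < g" by simp
  have "(\<integral>\<^sup>+r. ennreal (mprof g r) \<partial>U) = (\<integral>\<^sup>+r. ennreal (mprof g r) * indicator {0..1} r \<partial>lborel) / emeasure lborel {0..1::real}"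
    unfolding U_def by (rule nn_integral_uniform_measure) auto
  also have "\<dots> = (\<integral>\<^sup>+r. ennreal (mprof g r) * indicator {0..1} r \<partial>lborel)" by (simp add: divide_ennreal_def)
  also have "\<dots> = (\<integral>\<^sup>+r. ennreal ((2 / g^2) * (r - (1 - g))) * indicator {1-g..1} r \<partial>lborel)"
    using assms unfolding mprof_def by (intro nn_integral_cong) (auto split: split_indicator simp: max_def)
  also have "\<dots> = ennreal ((1 - (1-g))^2 / g^2 - ((1-g) - (1-g))^2 / g^2)"
    by (rule nn_integral_FTC_Icc[where F="\<lambda>r. (r - (1-g))^2 / g^2"])
       (use g in \<open>auto intro!: derivative_eq_intros simp: field_simps power2_eq_square\<close>)
  also have "\<dots> = 1" using g by simp
  finally show ?thesis by simp
qed


definition strat :: "('c::finite \<Rightarrow> real) \<Rightarrow> real^'t::finite \<Rightarrow> real \<Rightarrow> (real^'t^'c) measure" where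
  "strat v Z g = distr U borel (\<lambda>r. \<chi> c t. Z$t * (v c * mprof g r))"

lemma strat_meas: "(\<lambda>r. \<chi> c t. (Z::real^'t::finite)$t * (v (c::'c::finite) * mprof g r)) \<in> measurable U borel"
  unfolding measurable_cong_sets[OF sets_U refl] mprof_def
  by (intro borel_measurable_continuous_onI continuous_intros)

lemma sets_strat[simp]: "sets (strat v Z g) = sets borel"
  unfolding strat_def by simp

lemma strat_in:
  fixes v :: "'c::finite \<Rightarrow> real" and Z :: "real^'t::finite"
  assumes Z: "\<forall>t. 0 \<le> Z$t" and v: "\<forall>c. 0 < v c" "(\<Sum>c\<in>UNIV. v c) = 1" and g: "0 \<le> g" "g \<le> 1"
  shows "strat v Z g \<in> strategies Z"
  unfolding strategies_def
proof (intro CollectI conjI allI)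
  show "prob_space (strat v Z g)"
    unfolding strat_def by (rule prob_space.prob_space_distr[OF U_prob strat_meas])
  show "sets (strat v Z g) = sets borel" by simp
  show "AE x in strat v Z g. \<forall>c t. 0 \<le> x $ c $ t"
    unfolding strat_def
    apply (subst AE_distr_iff[OF strat_meas])
     apply measurable
  proof (rule AE_I2, intro allI)
    fix r c t
    show "0 \<le> (\<chi> c t. Z $ t * (v c * mprof g r)) $ c $ t"
      using Z v by (simp, intro mult_nonneg_nonneg) (auto simp: less_imp_le mprof_nonneg)
  qed
  fix t
  have "(\<integral>\<^sup>+ x. ennreal (\<Sum>c\<in>UNIV. x $ c $ t) \<partial>strat v Z g)
      = (\<integral>\<^sup>+ r. ennreal (\<Sum>c\<in>UNIV. Z$t * (v c * mprof g r)) \<partial>U)"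
    unfolding strat_def by (subst nn_integral_distr[OF strat_meas]) (auto)
  also have "\<dots> = (\<integral>\<^sup>+ r. ennreal (Z$t) * ennreal (mprof g r) \<partial>U)"
  proof (intro nn_integral_cong)
    fix r
    have "(\<Sum>c\<in>UNIV. Z$t * (v c * mprof g r)) = Z$t * mprof g r * (\<Sum>c\<in>UNIV. v c)"
      by (simp add: sum_distrib_left sum_distrib_right mult_ac)
    then show "ennreal (\<Sum>c\<in>UNIV. Z$t * (v c * mprof g r)) = ennreal (Z$t) * ennreal (mprof g r)"
      using v Z by (simp add: ennreal_mult mprof_nonneg)
  qed
  also have "\<dots> = ennreal (Z$t) * (\<integral>\<^sup>+ r. ennreal (mprof g r) \<partial>U)"
    by (rule nn_integral_cmult) (simp add: measurable_cong_sets[OF sets_U refl])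
  also have "\<dots> \<le> ennreal (Z$t) * 1"
    by (intro mult_left_mono mprof_budget g) simp
  finally show "(\<integral>\<^sup>+ x. ennreal (\<Sum>c\<in>UNIV. x $ c $ t) \<partial>strat v Z g) \<le> ennreal (Z$t)" by simp
qed

definition hh :: "('c::finite \<Rightarrow> real) \<Rightarrow> real^'t::finite \<Rightarrow> real^'t \<Rightarrow> real^'t^'c \<Rightarrow> real^'t^'c \<Rightarrow> real" where
  "hh v a b x y = (\<Sum>c\<in>UNIV. v c * W_WC a b (x$c) (y$c))"

lemma hh_bounds:
  assumes "\<forall>c. 0 < v c"
  shows "0 \<le> hh v a b x y" "hh v a b x y \<le> (\<Sum>c\<in>UNIV. v c)"
  using assms unfolding hh_def W_WC_def
  by (auto intro!: sum_nonneg sum_mono simp: less_imp_le)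

lemma payoff_iter:
  fixes F G :: "(real^'t::finite^'c::finite) measure"
  assumes pF: "prob_space F" and pG: "prob_space G"
    and sF[measurable_cong]: "sets F = sets borel" and sG[measurable_cong]: "sets G = sets borel"
    and v: "\<forall>c. 0 < v c"
  shows "payoffX v a b F G = (\<integral>y. (\<integral>x. hh v a b x y \<partial>F) \<partial>G)"
    and "payoffX v a b F G = (\<integral>x. (\<integral>y. hh v a b x y \<partial>G) \<partial>F)"
    and "integrable G (\<lambda>y. \<integral>x. hh v a b x y \<partial>F)"
    and "integrable F (\<lambda>x. \<integral>y. hh v a b x y \<partial>G)"
proof -
  interpret F: prob_space F by fact
  interpret G: prob_space G by fact
  interpret P: pair_prob_space F G ..
  have meas: "(\<lambda>(x,y). hh v a b x y) \<in> borel_measurable (F \<Otimes>\<^sub>M G)"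
    unfolding hh_def W_WC_def split_beta' by measurable
  have int: "integrable (F \<Otimes>\<^sub>M G) (\<lambda>(x,y). hh v a b x y)"
    by (rule P.integrable_const_bound[where B="\<Sum>c\<in>UNIV. v c"])
       (use meas in \<open>auto simp: split_beta' abs_of_nonneg hh_bounds[OF v] intro!: AE_I2\<close>)
  have eq: "payoffX v a b F G = integral\<^sup>L (F \<Otimes>\<^sub>M G) (\<lambda>(x,y). hh v a b x y)"
    unfolding payoffX_def hh_def by (simp add: split_beta')
  show "payoffX v a b F G = (\<integral>y. (\<integral>x. hh v a b x y \<partial>F) \<partial>G)"
    unfolding eq P.integral_snd[OF int] ..
  show "payoffX v a b F G = (\<integral>x. (\<integral>y. hh v a b x y \<partial>G) \<partial>F)"
    unfolding eq P.integral_fst[OF int] ..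
  show "integrable G (\<lambda>y. \<integral>x. hh v a b x y \<partial>F)" by (rule P.integrable_snd[OF int])
  show "integrable F (\<lambda>x. \<integral>y. hh v a b x y \<partial>G)" by (rule P.integrable_fst[OF int])
qed

lemma expect_bound:
  fixes G :: "(real^'t::finite^'c::finite) measure"
  assumes G: "G \<in> strategies Y" and Y: "\<forall>t. 0 \<le> Y$t" and b: "\<forall>t. 0 \<le> b$t"
  shows "integrable G (\<lambda>y. \<Sum>c\<in>UNIV. \<Sum>t\<in>UNIV. b$t * y$c$t)"
    and "(\<integral>y. (\<Sum>c\<in>UNIV. \<Sum>t\<in>UNIV. b$t * y$c$t) \<partial>G) \<le> (\<Sum>t\<in>UNIV. b$t * Y$t)"
proof -
  have sG[measurable_cong]: "sets G = sets borel" and pG: "prob_space G"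
    and ae: "AE y in G. \<forall>c t. 0 \<le> y$c$t"
    and bud: "\<And>t. (\<integral>\<^sup>+y. ennreal (\<Sum>c\<in>UNIV. y$c$t) \<partial>G) \<le> ennreal (Y$t)"
    using G unfolding strategies_def by auto
  have it: "integrable G (\<lambda>y. \<Sum>c\<in>UNIV. y$c$t) \<and> (\<integral>y. (\<Sum>c\<in>UNIV. y$c$t) \<partial>G) \<le> Y$t" for t
  proof
    have nn: "AE y in G. 0 \<le> (\<Sum>c\<in>UNIV. y$c$t)"
      using ae by eventually_elim (auto intro!: sum_nonneg)
    show i: "integrable G (\<lambda>y. \<Sum>c\<in>UNIV. y$c$t)"
    proof (rule integrableI_nonneg)
      show "(\<integral>\<^sup>+y. ennreal (\<Sum>c\<in>UNIV. y$c$t) \<partial>G) < \<infinity>"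
        by (rule le_less_trans[OF bud[of t]]) simp
    qed (use nn in auto)
    have "ennreal (\<integral>y. (\<Sum>c\<in>UNIV. y$c$t) \<partial>G) \<le> ennreal (Y$t)"
      using nn_integral_eq_integral[OF i nn] bud[of t] by simp
    then show "(\<integral>y. (\<Sum>c\<in>UNIV. y$c$t) \<partial>G) \<le> Y$t" using Y by (simp add: ennreal_le_iff)
  qed
  have eq: "(\<lambda>y. \<Sum>c\<in>UNIV. \<Sum>t\<in>UNIV. b$t * y$c$t) = (\<lambda>y. \<Sum>t\<in>UNIV. b$t * (\<Sum>c\<in>UNIV. y$c$t))"
    by (auto simp: sum_distrib_left intro!: sum.swap)
  show "integrable G (\<lambda>y. \<Sum>c\<in>UNIV. \<Sum>t\<in>UNIV. b$t * y$c$t)"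
    unfolding eq using it by (auto intro!: integrable_sum integrable_mult_right)
  have "(\<integral>y. (\<Sum>c\<in>UNIV. \<Sum>t\<in>UNIV. b$t * y$c$t) \<partial>G) = (\<Sum>t\<in>UNIV. b$t * (\<integral>y. (\<Sum>c\<in>UNIV. y$c$t) \<partial>G))"
    unfolding eq
  proof -
    have "(\<integral>y. (\<Sum>t\<in>UNIV. b$t * (\<Sum>c\<in>UNIV. y$c$t)) \<partial>G) = (\<Sum>t\<in>UNIV. (\<integral>y. b$t * (\<Sum>c\<in>UNIV. y$c$t) \<partial>G))"
      by (rule Bochner_Integration.integral_sum[where f="\<lambda>t y. b$t * (\<Sum>c\<in>UNIV. y$c$t)"]) (use it in auto)
    then show "(\<integral>y. (\<Sum>t\<in>UNIV. b$t * (\<Sum>c\<in>UNIV. y$c$t)) \<partial>G) = (\<Sum>t\<in>UNIV. b$t * (\<integral>y. (\<Sum>c\<in>UNIV. y$c$t) \<partial>G))"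
      by simp
  qed
  also have "\<dots> \<le> (\<Sum>t\<in>UNIV. b$t * Y$t)"
    using it b by (intro sum_mono mult_left_mono) auto
  finally show "(\<integral>y. (\<Sum>c\<in>UNIV. \<Sum>t\<in>UNIV. b$t * y$c$t) \<partial>G) \<le> (\<Sum>t\<in>UNIV. b$t * Y$t)" .
qed


lemma lower_gen:
  fixes F G :: "(real^'t::finite^'c::finite) measure"
  assumes G: "G \<in> strategies Y" and Y: "\<forall>t. 0 \<le> Y$t" and b: "\<forall>t. 0 \<le> b$t"
    and pF: "prob_space F" and sF: "sets F = sets borel" and v: "\<forall>c. 0 < v c" and q: "0 \<le> q"
    and H: "\<And>y. \<forall>c t. 0 \<le> y$c$t \<Longrightarrow> p - q * (\<Sum>c\<in>UNIV. \<Sum>t\<in>UNIV. b$t * y$c$t) \<le> (\<integral>x. hh v a b x y \<partial>F)"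
  shows "p - q * (\<Sum>t\<in>UNIV. b$t * Y$t) \<le> payoffX v a b F G"
proof -
  have sG: "sets G = sets borel" and pG: "prob_space G"
    and ae: "AE y in G. \<forall>c t. 0 \<le> y$c$t"
    using G unfolding strategies_def by auto
  interpret G: prob_space G by fact
  note eb = expect_bound[OF G Y b]
  note pi = payoff_iter[OF pF pG sF sG v, of a b]
  have "p - q * (\<Sum>t\<in>UNIV. b$t * Y$t) \<le> p - q * (\<integral>y. (\<Sum>c\<in>UNIV. \<Sum>t\<in>UNIV. b$t * y$c$t) \<partial>G)"
    using eb(2) q by (simp add: mult_left_mono)
  also have "\<dots> = (\<integral>y. p - q * (\<Sum>c\<in>UNIV. \<Sum>t\<in>UNIV. b$t * y$c$t) \<partial>G)"
    using eb(1) by (simp add: G.prob_space)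
  also have "\<dots> \<le> (\<integral>y. (\<integral>x. hh v a b x y \<partial>F) \<partial>G)"
  proof (rule integral_mono_AE)
    show "integrable G (\<lambda>y. p - q * (\<Sum>c\<in>UNIV. \<Sum>t\<in>UNIV. b$t * y$c$t))"
      using eb(1) by auto
    show "integrable G (\<lambda>y. \<integral>x. hh v a b x y \<partial>F)" by (rule pi(3))
    show "AE y in G. p - q * (\<Sum>c\<in>UNIV. \<Sum>t\<in>UNIV. b$t * y$c$t) \<le> (\<integral>x. hh v a b x y \<partial>F)"
      using ae by eventually_elim (rule H)
  qed
  also have "\<dots> = payoffX v a b F G" using pi(1) by simp
  finally show ?thesis .
qed

lemma upper_gen:
  fixes F G :: "(real^'t::finite^'c::finite) measure"
  assumes F: "F \<in> strategies X" and X: "\<forall>t. 0 \<le> X$t" and a: "\<forall>t. 0 \<le> a$t"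
    and pG: "prob_space G" and sG: "sets G = sets borel" and v: "\<forall>c. 0 < v c" and q: "0 \<le> q"
    and H: "\<And>x. \<forall>c t. 0 \<le> x$c$t \<Longrightarrow> (\<integral>y. hh v a b x y \<partial>G) \<le> p + q * (\<Sum>c\<in>UNIV. \<Sum>t\<in>UNIV. a$t * x$c$t)"
  shows "payoffX v a b F G \<le> p + q * (\<Sum>t\<in>UNIV. a$t * X$t)"
proof -
  have sF: "sets F = sets borel" and pF: "prob_space F"
    and ae: "AE x in F. \<forall>c t. 0 \<le> x$c$t"
    using F unfolding strategies_def by auto
  interpret F: prob_space F by fact
  note eb = expect_bound[OF F X a]
  note pi = payoff_iter[OF pF pG sF sG v, of a b]
  have "payoffX v a b F G = (\<integral>x. (\<integral>y. hh v a b x y \<partial>G) \<partial>F)" using pi(2) by simp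
  also have "\<dots> \<le> (\<integral>x. p + q * (\<Sum>c\<in>UNIV. \<Sum>t\<in>UNIV. a$t * x$c$t) \<partial>F)"
  proof (rule integral_mono_AE)
    show "integrable F (\<lambda>x. p + q * (\<Sum>c\<in>UNIV. \<Sum>t\<in>UNIV. a$t * x$c$t))"
      using eb(1) by auto
    show "integrable F (\<lambda>x. \<integral>y. hh v a b x y \<partial>G)" by (rule pi(4))
    show "AE x in F. (\<integral>y. hh v a b x y \<partial>G) \<le> p + q * (\<Sum>c\<in>UNIV. \<Sum>t\<in>UNIV. a$t * x$c$t)"
      using ae by eventually_elim (rule H)
  qed
  also have "\<dots> = p + q * (\<integral>x. (\<Sum>c\<in>UNIV. \<Sum>t\<in>UNIV. a$t * x$c$t) \<partial>F)"
    using eb(1) by (simp add: F.prob_space)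
  also have "\<dots> \<le> p + q * (\<Sum>t\<in>UNIV. a$t * X$t)"
    using eb(2) q by (simp add: mult_left_mono)
  finally show ?thesis .
qed

lemma hh_meas_x[measurable]: "(\<lambda>x. hh v a b x y) \<in> borel_measurable borel"
  unfolding hh_def W_WC_def by measurable

lemma hh_meas_y[measurable]: "(\<lambda>y. hh v a b x y) \<in> borel_measurable borel"
  unfolding hh_def W_WC_def by measurable

lemma strat_lower:
  fixes v :: "'c::finite \<Rightarrow> real" and Z a b :: "real^'t::finite" and y :: "real^'t^'c"
  assumes v: "\<forall>c. 0 < v c" "(\<Sum>c\<in>UNIV. v c) = 1" and g: "0 < g" "g \<le> 1"
    and K: "K = (\<Sum>t\<in>UNIV. a$t * Z$t)" "0 < K"
    and y: "\<forall>c t. 0 \<le> y$c$t" and b: "\<forall>t. 0 \<le> b$t"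
  shows "g - g^2 / (2*K) * (\<Sum>c\<in>UNIV. \<Sum>t\<in>UNIV. b$t * y$c$t) \<le> (\<integral>x. hh v a b x y \<partial>strat v Z g)"
proof -
  define s where "s c = (\<Sum>t\<in>UNIV. b$t * y$c$t)" for c
  have s0: "0 \<le> s c" for c unfolding s_def using y b by (auto intro!: sum_nonneg)
  have key: "hh v a b (\<chi> c t. Z$t * (v c * mprof g r)) y
      = (\<Sum>c\<in>UNIV. v c * (if s c \<le> K * (v c * mprof g r) then 1 else 0))" for r
  proof -
    have "(\<Sum>t\<in>UNIV. a$t * (Z$t * (v c * mprof g r))) = K * (v c * mprof g r)" for c
      unfolding K(1) by (simp add: sum_distrib_right mult.assoc)
    then show ?thesis unfolding hh_def W_WC_def s_def by simp
  qed
  have ints: "integrable U (\<lambda>r. v c * (if s c \<le> K * (v c * mprof g r) then 1 else 0))" for c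
    by (rule U_integrable[where B="v c"]) (use v(1)[rule_format, of c] in auto)
  have "(\<integral>x. hh v a b x y \<partial>strat v Z g) = (\<integral>r. hh v a b (\<chi> c t. Z$t * (v c * mprof g r)) y \<partial>U)"
    unfolding strat_def by (rule integral_distr[OF strat_meas]) measurable
  also have "\<dots> = (\<Sum>c\<in>UNIV. v c * (\<integral>r. (if s c \<le> K * (v c * mprof g r) then 1 else 0) \<partial>U))"
    unfolding key by (subst Bochner_Integration.integral_sum) (use ints in auto)
  finally have eq: "(\<integral>x. hh v a b x y \<partial>strat v Z g) = \<dots>" .
  have "(\<Sum>c\<in>UNIV. v c * (g - g^2 * s c / (2 * v c * K))) \<le> (\<Sum>c\<in>UNIV. v c * (\<integral>r. (if s c \<le> K * (v c * mprof g r) then 1 else 0) \<partial>U))"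
    using v g K s0 by (intro sum_mono mult_left_mono ind_lower) (auto simp: less_imp_le dest: spec[of _ c])
  moreover have "(\<Sum>c\<in>UNIV. v c * (g - g^2 * s c / (2 * v c * K))) = (\<Sum>c\<in>UNIV. v c * g - g^2 / (2*K) * s c)"
    using K by (intro sum.cong refl) (use v(1)[rule_format] in \<open>auto simp: field_simps less_imp_neq[symmetric]\<close>)
  moreover have "(\<Sum>c\<in>UNIV. v c * g - g^2 / (2*K) * s c) = g - g^2 / (2*K) * (\<Sum>c\<in>UNIV. s c)"
    using v by (simp add: sum_subtractf sum_distrib_left[symmetric] sum_distrib_right[symmetric] sum_divide_distrib[symmetric])
  ultimately show ?thesis unfolding eq s_def by simp
qed

lemma strat_upper:
  fixes v :: "'c::finite \<Rightarrow> real" and Z a b :: "real^'t::finite" and x :: "real^'t^'c"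
  assumes v: "\<forall>c. 0 < v c" "(\<Sum>c\<in>UNIV. v c) = 1" and g: "0 < g" "g \<le> 1"
    and K: "K = (\<Sum>t\<in>UNIV. b$t * Z$t)" "0 < K"
    and x: "\<forall>c t. 0 \<le> x$c$t" and a: "\<forall>t. 0 \<le> a$t"
  shows "(\<integral>y. hh v a b x y \<partial>strat v Z g) \<le> (1 - g) + g^2 / (2*K) * (\<Sum>c\<in>UNIV. \<Sum>t\<in>UNIV. a$t * x$c$t)"
proof -
  define s where "s c = (\<Sum>t\<in>UNIV. a$t * x$c$t)" for c
  have s0: "0 \<le> s c" for c unfolding s_def using x a by (auto intro!: sum_nonneg)
  have key: "hh v a b x (\<chi> c t. Z$t * (v c * mprof g r))
      = (\<Sum>c\<in>UNIV. v c * (if K * (v c * mprof g r) \<le> s c then 1 else 0))" for r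
  proof -
    have "(\<Sum>t\<in>UNIV. b$t * (Z$t * (v c * mprof g r))) = K * (v c * mprof g r)" for c
      unfolding K(1) by (simp add: sum_distrib_right mult.assoc)
    then show ?thesis unfolding hh_def W_WC_def s_def by simp
  qed
  have ints: "integrable U (\<lambda>r. v c * (if K * (v c * mprof g r) \<le> s c then 1 else 0))" for c
    by (rule U_integrable[where B="v c"]) (use v(1)[rule_format, of c] in auto)
  have "(\<integral>y. hh v a b x y \<partial>strat v Z g) = (\<integral>r. hh v a b x (\<chi> c t. Z$t * (v c * mprof g r)) \<partial>U)"
    unfolding strat_def by (rule integral_distr[OF strat_meas]) measurable
  also have "\<dots> = (\<Sum>c\<in>UNIV. v c * (\<integral>r. (if K * (v c * mprof g r) \<le> s c then 1 else 0) \<partial>U))"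
    unfolding key by (subst Bochner_Integration.integral_sum) (use ints in auto)
  finally have eq: "(\<integral>y. hh v a b x y \<partial>strat v Z g) = \<dots>" .
  have "(\<Sum>c\<in>UNIV. v c * (\<integral>r. (if K * (v c * mprof g r) \<le> s c then 1 else 0) \<partial>U)) \<le> (\<Sum>c\<in>UNIV. v c * (1 - g + g^2 * s c / (2 * v c * K)))"
    using v g K s0 by (intro sum_mono mult_left_mono ind_upper) (auto simp: less_imp_le dest: spec[of _ c])
  moreover have "(\<Sum>c\<in>UNIV. v c * (1 - g + g^2 * s c / (2 * v c * K))) = (\<Sum>c\<in>UNIV. v c * (1 - g) + g^2 / (2*K) * s c)"
    using K by (intro sum.cong refl) (use v(1)[rule_format] in \<open>auto simp: field_simps less_imp_neq[symmetric]\<close>)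
  moreover have "(\<Sum>c\<in>UNIV. v c * (1 - g) + g^2 / (2*K) * s c) = (1 - g) + g^2 / (2*K) * (\<Sum>c\<in>UNIV. s c)"
    using v by (simp add: sum.distrib sum_distrib_left[symmetric] sum_distrib_right[symmetric] sum_divide_distrib[symmetric])
  ultimately show ?thesis unfolding eq s_def by simp
qed


lemma hh_int_le:
  fixes G :: "(real^'t::finite^'c::finite) measure"
  assumes pG: "prob_space G" and sG[measurable_cong]: "sets G = sets borel" and v: "\<forall>c. 0 < v c"
  shows "(\<integral>y. hh v a b x y \<partial>G) \<le> (\<Sum>c\<in>UNIV. v c)"
proof -
  interpret G: prob_space G by fact
  have "integrable G (\<lambda>y. hh v a b x y)"
    by (rule G.integrable_const_bound[where B="\<Sum>c\<in>UNIV. v c"])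
       (auto simp: abs_of_nonneg hh_bounds[OF v] intro!: AE_I2)
  then show ?thesis
    by (rule G.integral_le_const) (auto simp: hh_bounds[OF v] intro!: AE_I2)
qed

theorem proposition1:
  fixes v :: "'c::finite \<Rightarrow> real" and a b X Y :: "real^'t::finite"
  assumes "\<forall>c. v c > 0" and "(\<Sum>c\<in>UNIV. v c) = 1"
    and "\<forall>t. 0 \<le> a$t" and "\<forall>t. 0 \<le> b$t"
    and "\<forall>t. 0 \<le> X$t" and "\<forall>t. 0 \<le> Y$t"
    and "(\<Sum>t\<in>UNIV. a$t * X$t) > 0"
  defines "\<beta> \<equiv> (\<Sum>t\<in>UNIV. b$t * Y$t) / (\<Sum>t\<in>UNIV. a$t * X$t)"
  shows "(\<exists>F G. is_equilibrium v a b X Y F G) \<and>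
         (\<forall>F G. is_equilibrium v a b X Y F G \<longrightarrow>
             payoffX v a b F G = L \<beta> \<and> payoffY v a b F G = 1 - L \<beta>)"
proof -
  note v = assms(1,2) and a = assms(3) and b = assms(4) and X = assms(5) and Y = assms(6)
  define A where "A = (\<Sum>t\<in>UNIV. a$t * X$t)"
  define B where "B = (\<Sum>t\<in>UNIV. b$t * Y$t)"
  have A0: "0 < A" using assms(7) unfolding A_def .
  have B0: "0 \<le> B" unfolding B_def using b Y by (auto intro!: sum_nonneg)
  have BA: "B = \<beta> * A" unfolding \<beta>_def A_def[symmetric] B_def[symmetric] using A0 by simp
  have b0: "0 \<le> \<beta>" unfolding \<beta>_def A_def[symmetric] B_def[symmetric] using A0 B0 by simp
  define gx where "gx = (if \<beta> \<le> 1 then 1 else 1 / \<beta>)"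
  define gy where "gy = (if \<beta> \<le> 1 then \<beta> else 1)"
  have gx: "0 < gx" "gx \<le> 1" unfolding gx_def using b0 by auto
  have gy: "0 \<le> gy" "gy \<le> 1" unfolding gy_def using b0 by auto
  define Fs where "Fs = strat v X gx"
  define Gs where "Gs = strat v Y gy"
  have Fs: "Fs \<in> strategies X" unfolding Fs_def using strat_in[OF X v] gx by auto
  have Gs: "Gs \<in> strategies Y" unfolding Gs_def using strat_in[OF Y v] gy by auto
  have pFs: "prob_space Fs" and pGs: "prob_space Gs"
    using Fs Gs unfolding strategies_def by auto
  have low: "L \<beta> \<le> payoffX v a b Fs G" if G: "G \<in> strategies Y" for G
  proof -
    have "gx - gx^2 / (2*A) * B \<le> payoffX v a b Fs G"
      unfolding B_def
    proof (rule lower_gen[OF G Y b pFs _ v(1)])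
      show "sets Fs = sets borel" unfolding Fs_def by simp
      show "0 \<le> gx^2 / (2*A)" using A0 by simp
      fix y :: "real^'t^'c" assume "\<forall>c t. 0 \<le> y$c$t"
      then show "gx - gx^2 / (2*A) * (\<Sum>c\<in>UNIV. \<Sum>t\<in>UNIV. b$t * y$c$t) \<le> (\<integral>x. hh v a b x y \<partial>Fs)"
        unfolding Fs_def by (rule strat_lower[OF v gx A_def A0 _ b])
    qed
    moreover have "gx - gx^2 / (2*A) * B = L \<beta>"
      unfolding gx_def L_def BA using A0 b0 by (auto simp: field_simps power2_eq_square)
    ultimately show ?thesis by simp
  qed
  have up: "payoffX v a b F Gs \<le> L \<beta>" if F: "F \<in> strategies X" for F
  proof (cases "B = 0")
    case True
    then have "\<beta> = 0" using BA A0 by simp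
    then have Lb: "L \<beta> = 1" by (simp add: L_def)
    have "payoffX v a b F Gs \<le> 1 + 0 * A"
      unfolding A_def
    proof (rule upper_gen[OF F X a pGs _ v(1)])
      show "sets Gs = sets borel" unfolding Gs_def by simp
      fix x :: "real^'t^'c"
      show "(\<integral>y. hh v a b x y \<partial>Gs) \<le> 1 + 0 * (\<Sum>c\<in>UNIV. \<Sum>t\<in>UNIV. a$t * x$c$t)"
        using hh_int_le[OF pGs _ v(1), of a b x] v(2) unfolding Gs_def by simp
    qed simp
    then show ?thesis using Lb by simp
  next
    case False
    with B0 have Bp: "0 < B" by simp
    then have bp: "0 < \<beta>" using BA A0 by (simp add: zero_less_mult_iff)
    have gyp: "0 < gy" unfolding gy_def using bp by simp
    have "payoffX v a b F Gs \<le> (1 - gy) + gy^2 / (2*B) * A"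
      unfolding A_def
    proof (rule upper_gen[OF F X a pGs _ v(1)])
      show "sets Gs = sets borel" unfolding Gs_def by simp
      show "0 \<le> gy^2 / (2*B)" using Bp by simp
      fix x :: "real^'t^'c" assume "\<forall>c t. 0 \<le> x$c$t"
      then show "(\<integral>y. hh v a b x y \<partial>Gs) \<le> (1 - gy) + gy^2 / (2*B) * (\<Sum>c\<in>UNIV. \<Sum>t\<in>UNIV. a$t * x$c$t)"
        unfolding Gs_def by (rule strat_upper[OF v gyp gy(2) B_def Bp _ a])
    qed
    moreover have "(1 - gy) + gy^2 / (2*B) * A = L \<beta>"
      unfolding gy_def L_def BA using A0 bp by (auto simp: field_simps power2_eq_square)
    ultimately show ?thesis by simp
  qed
  have eqv: "payoffX v a b Fs Gs = L \<beta>" using low[OF Gs] up[OF Fs] by simp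
  have ex: "is_equilibrium v a b X Y Fs Gs"
    unfolding is_equilibrium_def using Fs Gs eqv low up by auto
  show ?thesis
  proof (intro conjI allI impI)
    show "\<exists>F G. is_equilibrium v a b X Y F G" using ex by blast
    fix F G assume E: "is_equilibrium v a b X Y F G"
    then have F: "F \<in> strategies X" and G: "G \<in> strategies Y"
      and bestF: "payoffX v a b Fs G \<le> payoffX v a b F G"
      and bestG: "payoffX v a b F G \<le> payoffX v a b F Gs"
      using Fs Gs unfolding is_equilibrium_def by auto
    show "payoffX v a b F G = L \<beta>" using low[OF G] up[OF F] bestF bestG by simp
    then show "payoffY v a b F G = 1 - L \<beta>" by (simp add: payoffY_def)
  qed
qed

end
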